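(* Let $n\ge1$ and let $\delta$ be a dependent variable of $\mathsf{Q}$. Let $\mathcal T$ consist of the two formulas $(\delta,1)\leftrightarrow(\phi_1,1)\land\dots\land(\phi_n,1)$ and $(\delta,0)\leftrightarrow(\phi_1,0)\land\dots\land(\phi_n,0)$. Then every evaluation satisfying $\mathcal T$ has $\delta^+=\{(1,\dots,1)\}$ and $\delta^-=\{(0,\dots,0)\}$; for such an evaluation, $\delta$ holds at each world $w=(c_1,\dots,c_n)\in W$ to the degree $\frac1n(c_1+\dots+c_n)$; consequently, for all $c_1,\dots,c_n\in[0,1]$, $\mathcal T$ entails $(\phi_1,c_1)\land\dots\land(\phi_n,c_n)\to\big(\delta,\tfrac{c_1+\dots+c_n}{n}\big)$.
   Context: The logic $\mathsf{Q}$: fix $n\ge1$, basic variables $\phi_1,\dots,\phi_n$ and countably many dependent variables $\alpha_1,\alpha_2,\dots$. A graded variable is a pair $(\alpha,c)$ with $\alpha$ a variable and $c\in[0,1]$. Formulas are built from graded variables by classical $\land,\lor,\lnot$; $\Phi\to\Psi$ abbreviates $\lnot\Phi\lor\Psi$ and $\leftrightarrow$ is the usual biconditional. The set of worlds is $W=[0,1]^n$ with metric $d((c_1,\dots,c_n),(d_1,\dots,d_n))=\sum_i|c_i-d_i|$, and $d(w,A)=\inf_{a\in A}d(w,a)$ for $A\subseteq W$. An evaluation assigns to each variable $\alpha$ a pair $(\alpha^+,\alpha^-)$ of disjoint nonempty closed subsets of $W$, with $\phi_i^+=\{(a_1,\dots,a_n):a_i=1\}$ and $\phi_i^-=\{(a_1,\dots,a_n):a_i=0\}$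 for each basic variable. At $w\in W$, $\alpha$ holds to the degree $\frac{d(w,\alpha^-)}{d(w,\alpha^+)+d(w,\alpha^-)}$. Each formula $\Phi$ is assigned $[\Phi]\subseteq W$: $[(\alpha,c)]$ is the set of worlds at which $\alpha$ holds to degree $c$, and $\land,\lor,\lnot$ are interpreted by $\cap,\cup$, complement in $W$. An evaluation satisfies $\Phi$ iff $[\Phi]=W$. A theory is a set of formulas; it is correct if some evaluation satisfies all its elements, and a correct theory $\mathcal T$ entails $\Phi$ if every evaluation satisfying all elements of $\mathcal T$ satisfies $\Phi$. *)

theory Defs
  imports Complex_Main
begin

text \<open>The logic Q with n basic variables. Worlds of W = [0,1]^n are represented as
functions nat \<Rightarrow> real vanishing outside {..<n}; coordinate i (0-based) is c_(i+1).\<close>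

datatype qvar = Basic nat | Dep nat
  (* Basic i = phi_(i+1), meaningful for i < n;  Dep k = alpha_(k+1) *)

datatype qform = GV qvar real | Neg qform | Conj qform qform | Disj qform qform

definition qimp :: "qform \<Rightarrow> qform \<Rightarrow> qform" where
  "qimp A B = Disj (Neg A) B"

definition qiff :: "qform \<Rightarrow> qform \<Rightarrow> qform" where
  "qiff A B = Conj (qimp A B) (qimp B A)"

fun bigconj :: "qform list \<Rightarrow> qform" where
  "bigconj [] = Disj (GV (Dep 0) 0) (Neg (GV (Dep 0) 0))"
| "bigconj [x] = x"
| "bigconj (x # y # xs) = Conj x (bigconj (y # xs))"

definition worlds :: "nat \<Rightarrow> (nat \<Rightarrow> real) set" where
  "worlds n = {w. (\<forall>i<n. 0 \<le> w i \<and> w i \<le> 1) \<and> (\<forall>i\<ge>n. w i = 0)}"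

definition qdist :: "nat \<Rightarrow> (nat \<Rightarrow> real) \<Rightarrow> (nat \<Rightarrow> real) \<Rightarrow> real" where
  "qdist n w v = (\<Sum>i<n. \<bar>w i - v i\<bar>)"

definition qsetdist :: "nat \<Rightarrow> (nat \<Rightarrow> real) \<Rightarrow> (nat \<Rightarrow> real) set \<Rightarrow> real" where
  "qsetdist n w A = Inf (qdist n w ` A)"

definition qclosed :: "nat \<Rightarrow> (nat \<Rightarrow> real) set \<Rightarrow> bool" where
  "qclosed n A \<longleftrightarrow> A \<subseteq> worlds n \<and> (\<forall>w\<in>worlds n. qsetdist n w A = 0 \<longrightarrow> w \<in> A)"

definition good_pair :: "nat \<Rightarrow> (nat \<Rightarrow> real) set \<times> (nat \<Rightarrow> real) set \<Rightarrow> bool" where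
  "good_pair n p \<longleftrightarrow> fst p \<inter> snd p = {} \<and> fst p \<noteq> {} \<and> snd p \<noteq> {}
     \<and> qclosed n (fst p) \<and> qclosed n (snd p)"

definition is_eval :: "nat \<Rightarrow> (qvar \<Rightarrow> (nat \<Rightarrow> real) set \<times> (nat \<Rightarrow> real) set) \<Rightarrow> bool" where
  "is_eval n e \<longleftrightarrow> (\<forall>k. good_pair n (e (Dep k)))
     \<and> (\<forall>i<n. e (Basic i) = ({w \<in> worlds n. w i = 1}, {w \<in> worlds n. w i = 0}))"

definition degree :: "nat \<Rightarrow> (qvar \<Rightarrow> (nat \<Rightarrow> real) set \<times> (nat \<Rightarrow> real) set) \<Rightarrow> qvar \<Rightarrow> (nat \<Rightarrow> real) \<Rightarrow> real" where
  "degree n e a w = qsetdist n w (snd (e a)) / (qsetdist n w (fst (e a)) + qsetdist n w (snd (e a)))"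

fun qsem :: "nat \<Rightarrow> (qvar \<Rightarrow> (nat \<Rightarrow> real) set \<times> (nat \<Rightarrow> real) set) \<Rightarrow> qform \<Rightarrow> (nat \<Rightarrow> real) set" where
  "qsem n e (GV a c) = {w \<in> worlds n. degree n e a w = c}"
| "qsem n e (Neg A) = worlds n - qsem n e A"
| "qsem n e (Conj A B) = qsem n e A \<inter> qsem n e B"
| "qsem n e (Disj A B) = qsem n e A \<union> qsem n e B"

definition satisfies :: "nat \<Rightarrow> (qvar \<Rightarrow> (nat \<Rightarrow> real) set \<times> (nat \<Rightarrow> real) set) \<Rightarrow> qform \<Rightarrow> bool" where
  "satisfies n e A \<longleftrightarrow> qsem n e A = worlds n"

definition correct :: "nat \<Rightarrow> qform set \<Rightarrow> bool" where
  "correct n T \<longleftrightarrow> (\<exists>e. is_eval n e \<and> (\<forall>A\<in>T. satisfies n e A))"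

definition entails :: "nat \<Rightarrow> qform set \<Rightarrow> qform \<Rightarrow> bool" where
  "entails n T A \<longleftrightarrow> correct n T \<and>
     (\<forall>e. is_eval n e \<and> (\<forall>B\<in>T. satisfies n e B) \<longrightarrow> satisfies n e A)"

definition Tdelta :: "nat \<Rightarrow> qvar \<Rightarrow> qform set" where
  "Tdelta n d = {qiff (GV d 1) (bigconj (map (\<lambda>i. GV (Basic i) 1) [0..<n])),
                 qiff (GV d 0) (bigconj (map (\<lambda>i. GV (Basic i) 0) [0..<n]))}"

end

theory Submission
  imports Defs
begin

lemma qdist_nonneg: "qdist n w v \<ge> 0"
  unfolding qdist_def by (simp add: sum_nonneg)

lemma qdist_self: "qdist n w w = 0"
  unfolding qdist_def by simp

lemma qdist_zero_iff:
  assumes "w \<in> worlds n" "v \<in> worlds n"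
  shows "qdist n w v = 0 \<longleftrightarrow> w = v"
proof
  assume "qdist n w v = 0"
  then have "\<forall>i\<in>{..<n}. \<bar>w i - v i\<bar> = 0"
    unfolding qdist_def by (subst sum_nonneg_eq_0_iff[symmetric]) auto
  then show "w = v" using assms unfolding worlds_def
    by (intro ext) (metis (mono_tags, lifting) abs_0_eq eq_iff_diff_eq_0 lessThan_iff mem_Collect_eq not_le)
qed (simp add: qdist_self)

lemma qsetdist_nonneg: "A \<noteq> {} \<Longrightarrow> qsetdist n w A \<ge> 0"
  unfolding qsetdist_def by (rule cInf_greatest) (auto simp: qdist_nonneg)

lemma qsetdist_mem: "w \<in> A \<Longrightarrow> qsetdist n w A = 0"
  unfolding qsetdist_def
  by (rule cInf_eq_minimum) (auto simp: qdist_self qdist_nonneg intro: rev_image_eqI[where x=w])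

lemma qsetdist_single: "qsetdist n w {v} = qdist n w v"
  unfolding qsetdist_def by simp

lemma closed_zero:
  assumes "qclosed n A" "w \<in> worlds n"
  shows "qsetdist n w A = 0 \<longleftrightarrow> w \<in> A"
  using assms qsetdist_mem unfolding qclosed_def by blast

lemma deg_good:
  assumes "good_pair n (e a)" "w \<in> worlds n"
  shows "(degree n e a w = 1 \<longleftrightarrow> w \<in> fst (e a)) \<and> (degree n e a w = 0 \<longleftrightarrow> w \<in> snd (e a))"
proof -
  define A where "A = qsetdist n w (snd (e a))"
  define B where "B = qsetdist n w (fst (e a))"
  have cl: "qclosed n (fst (e a))" "qclosed n (snd (e a))" "fst (e a) \<inter> snd (e a) = {}"
    "fst (e a) \<noteq> {}" "snd (e a) \<noteq> {}"
    using assms(1) unfolding good_pair_def by auto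
  have A0: "A \<ge> 0" "B \<ge> 0" unfolding A_def B_def using cl qsetdist_nonneg by auto
  have Az: "A = 0 \<longleftrightarrow> w \<in> snd (e a)" "B = 0 \<longleftrightarrow> w \<in> fst (e a)"
    unfolding A_def B_def using closed_zero cl assms(2) by auto
  have d: "degree n e a w = A / (B + A)" unfolding degree_def A_def B_def by simp
  show ?thesis
  proof (cases "w \<in> fst (e a)")
    case True
    then have "w \<notin> snd (e a)" using cl by auto
    then show ?thesis using True Az A0 d by auto
  next
    case False
    then have "B > 0" using Az A0 by auto
    then have "A / (B + A) \<noteq> 1" using A0 by (simp add: field_simps)
    moreover have "A / (B + A) = 0 \<longleftrightarrow> A = 0" using \<open>B > 0\<close> A0 by auto
    ultimately show ?thesis using False Az d by auto
  qed
qed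

lemma qdist_single_term:
  assumes "i < n" "w \<in> worlds n"
  shows "qdist n w v \<ge> \<bar>w i - v i\<bar>"
  unfolding qdist_def using assms
  by (intro member_le_sum[where f="\<lambda>j. \<bar>w j - v j\<bar>"]) auto

lemma qdist_upd:
  assumes "i < n"
  shows "qdist n w (w(i:=x)) = \<bar>w i - x\<bar>"
proof -
  have "qdist n w (w(i:=x)) = (\<Sum>j<n. if j = i then \<bar>w i - x\<bar> else 0)"
    unfolding qdist_def by (intro sum.cong) auto
  then show ?thesis using assms by simp
qed

lemma setdist_basic:
  assumes "i < n" "w \<in> worlds n" "x \<in> {0,1}"
  shows "qsetdist n w {v \<in> worlds n. v i = x} = \<bar>w i - x\<bar>"
  unfolding qsetdist_def
proof (rule cInf_eq_minimum)
  have "w(i:=x) \<in> worlds n" using assms unfolding worlds_def by auto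
  then show "\<bar>w i - x\<bar> \<in> qdist n w ` {v \<in> worlds n. v i = x}"
    using qdist_upd[OF assms(1)] by (intro image_eqI[where x="w(i:=x)"]) auto
next
  fix y assume "y \<in> qdist n w ` {v \<in> worlds n. v i = x}"
  then show "\<bar>w i - x\<bar> \<le> y" using qdist_single_term[OF assms(1,2)] by auto
qed

lemma deg_basic:
  assumes "is_eval n e" "i < n" "w \<in> worlds n"
  shows "degree n e (Basic i) w = w i"
proof -
  have e: "e (Basic i) = ({w \<in> worlds n. w i = 1}, {w \<in> worlds n. w i = 0})"
    using assms unfolding is_eval_def by auto
  have b: "0 \<le> w i" "w i \<le> 1" using assms unfolding worlds_def by auto
  show ?thesis unfolding degree_def e
    using setdist_basic[OF assms(2,3), of 1] setdist_basic[OF assms(2,3), of 0] b by simp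
qed

lemma qsem_sub: "qsem n e A \<subseteq> worlds n"
  by (induction A) auto

lemma qsem_bigconj:
  "xs \<noteq> [] \<Longrightarrow> qsem n e (bigconj xs) = worlds n \<inter> (\<Inter>A\<in>set xs. qsem n e A)"
  by (induction xs rule: bigconj.induct) (use qsem_sub in auto)

lemma conj_basic:
  assumes "is_eval n e" "n \<ge> 1"
  shows "qsem n e (bigconj (map (\<lambda>i. GV (Basic i) (c i)) [0..<n])) = {w \<in> worlds n. \<forall>i<n. w i = c i}"
proof -
  have ne: "map (\<lambda>i. GV (Basic i) (c i)) [0..<n] \<noteq> []" using assms by simp
  show ?thesis unfolding qsem_bigconj[OF ne]
    using deg_basic[OF assms(1)] by auto
qed

lemma one_set: "{w \<in> worlds n. \<forall>i<n. w i = 1} = {\<lambda>i. if i < n then 1 else 0}"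
  unfolding worlds_def by (auto simp: fun_eq_iff)

lemma zero_set: "{w \<in> worlds n. \<forall>i<n. w i = 0} = {\<lambda>i. 0}"
  unfolding worlds_def by (auto simp: fun_eq_iff) (metis not_less)

lemma deg_formula:
  assumes "e a = ({\<lambda>i. if i < n then 1 else 0}, {\<lambda>i. 0})" "w \<in> worlds n" "n \<ge> 1"
  shows "degree n e a w = (\<Sum>i<n. w i) / real n"
proof -
  have b: "\<forall>i<n. 0 \<le> w i \<and> w i \<le> 1" using assms unfolding worlds_def by auto
  have d1: "qdist n w (\<lambda>i. if i < n then 1 else 0) = (\<Sum>i<n. 1 - w i)"
    unfolding qdist_def using b by (intro sum.cong) auto
  have d0: "qdist n w (\<lambda>i. 0) = (\<Sum>i<n. w i)"
    unfolding qdist_def using b by (intro sum.cong) auto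
  have "(\<Sum>i<n. 1 - w i) + (\<Sum>i<n. w i) = real n"
    by (simp add: sum_subtractf)
  then show ?thesis unfolding degree_def assms(1) using d1 d0
    by (simp add: qsetdist_single)
qed

lemma sat_qiff:
  "satisfies n e (qiff A B) \<longleftrightarrow> qsem n e A = qsem n e B"
  unfolding satisfies_def qiff_def qimp_def using qsem_sub[of n e A] qsem_sub[of n e B] by auto

lemma sat_qimp:
  "satisfies n e (qimp A B) \<longleftrightarrow> qsem n e A \<subseteq> qsem n e B"
  unfolding satisfies_def qimp_def using qsem_sub[of n e A] qsem_sub[of n e B] by auto

lemma part1:
  assumes "n \<ge> 1" "is_eval n e" "\<forall>A\<in>Tdelta n (Dep k). satisfies n e A"
  shows "e (Dep k) = ({\<lambda>i. if i < n then 1 else 0}, {\<lambda>i. 0})"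
proof -
  have g: "good_pair n (e (Dep k))" using assms(2) unfolding is_eval_def by auto
  have sub: "fst (e (Dep k)) \<subseteq> worlds n" "snd (e (Dep k)) \<subseteq> worlds n"
    using g unfolding good_pair_def qclosed_def by auto
  have s1: "qsem n e (GV (Dep k) 1) = qsem n e (bigconj (map (\<lambda>i. GV (Basic i) 1) [0..<n]))"
    and s0: "qsem n e (GV (Dep k) 0) = qsem n e (bigconj (map (\<lambda>i. GV (Basic i) 0) [0..<n]))"
    using assms(3) unfolding Tdelta_def sat_qiff[symmetric] by auto
  have "qsem n e (GV (Dep k) 1) = fst (e (Dep k))"
    using deg_good[of n e "Dep k", OF g] sub by auto
  moreover have "qsem n e (GV (Dep k) 0) = snd (e (Dep k))"
    using deg_good[of n e "Dep k", OF g] sub by auto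
  moreover have "qsem n e (bigconj (map (\<lambda>i. GV (Basic i) 1) [0..<n])) = {\<lambda>i. if i < n then 1 else 0}"
    using conj_basic[OF assms(2,1), of "\<lambda>_. 1"] one_set by simp
  moreover have "qsem n e (bigconj (map (\<lambda>i. GV (Basic i) 0) [0..<n])) = {\<lambda>i. 0}"
    using conj_basic[OF assms(2,1), of "\<lambda>_. 0"] zero_set by simp
  ultimately show ?thesis using s1 s0 by (metis prod.collapse)
qed

definition e0 :: "nat \<Rightarrow> qvar \<Rightarrow> (nat \<Rightarrow> real) set \<times> (nat \<Rightarrow> real) set" where
  "e0 n v = (case v of Basic i \<Rightarrow> ({w \<in> worlds n. w i = 1}, {w \<in> worlds n. w i = 0})
                     | Dep j \<Rightarrow> ({\<lambda>i. if i < n then 1 else 0}, {\<lambda>i. 0}))"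

lemma single_closed: "v \<in> worlds n \<Longrightarrow> qclosed n {v}"
  unfolding qclosed_def using qdist_zero_iff by (auto simp: qsetdist_single)

lemma e0_eval: "n \<ge> 1 \<Longrightarrow> is_eval n (e0 n)"
proof -
  assume n: "n \<ge> 1"
  have w1: "(\<lambda>i. if i < n then 1 else 0) \<in> worlds n" and w0: "(\<lambda>i. 0::real) \<in> worlds n"
    unfolding worlds_def by auto
  have ne: "(\<lambda>i. if i < n then 1 else 0) \<noteq> (\<lambda>i. 0::real)"
    using n by (metis less_le_trans zero_less_one one_neq_zero)
  show ?thesis unfolding is_eval_def good_pair_def e0_def
    using single_closed[OF w1] single_closed[OF w0] ne by auto
qed

lemma e0_sat:
  assumes "n \<ge> 1"
  shows "\<forall>A\<in>Tdelta n (Dep k). satisfies n (e0 n) A"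
proof -
  have ev: "is_eval n (e0 n)" using e0_eval[OF assms] .
  have g: "good_pair n (e0 n (Dep k))" using ev unfolding is_eval_def by auto
  have w1: "(\<lambda>i. if i < n then 1 else 0) \<in> worlds n" and w0: "(\<lambda>i. 0::real) \<in> worlds n"
    unfolding worlds_def by auto
  have ed: "e0 n (Dep k) = ({\<lambda>i. if i < n then 1 else 0}, {\<lambda>i. 0})" unfolding e0_def by simp
  have "qsem n (e0 n) (GV (Dep k) 1) = {\<lambda>i. if i < n then 1 else 0}"
    using deg_good[of n "e0 n" "Dep k", OF g] ed w1 w0 by auto
  moreover have "qsem n (e0 n) (GV (Dep k) 0) = {\<lambda>i. 0}"
    using deg_good[of n "e0 n" "Dep k", OF g] ed w1 w0 by auto
  moreover have "qsem n (e0 n) (bigconj (map (\<lambda>i. GV (Basic i) 1) [0..<n])) = {\<lambda>i. if i < n then 1 else 0}"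
    using conj_basic[OF ev assms, of "\<lambda>_. 1"] one_set by simp
  moreover have "qsem n (e0 n) (bigconj (map (\<lambda>i. GV (Basic i) 0) [0..<n])) = {\<lambda>i. 0}"
    using conj_basic[OF ev assms, of "\<lambda>_. 0"] zero_set by simp
  ultimately show ?thesis unfolding Tdelta_def by (auto simp only: sat_qiff qsem.simps)
qed

theorem mainTheorem11:
  fixes n k :: nat
  assumes "n \<ge> 1"
  shows "(\<forall>e. is_eval n e \<and> (\<forall>A\<in>Tdelta n (Dep k). satisfies n e A) \<longrightarrow>
            e (Dep k) = ({\<lambda>i. if i < n then 1 else 0}, {\<lambda>i. 0})
            \<and> (\<forall>w\<in>worlds n. degree n e (Dep k) w = (\<Sum>i<n. w i) / real n))
       \<and> (\<forall>c :: nat \<Rightarrow> real. (\<forall>i<n. 0 \<le> c i \<and> c i \<le> 1) \<longrightarrow>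
            entails n (Tdelta n (Dep k))
              (qimp (bigconj (map (\<lambda>i. GV (Basic i) (c i)) [0..<n]))
                    (GV (Dep k) ((\<Sum>i<n. c i) / real n))))"
proof (intro conjI allI impI)
  fix e assume h: "is_eval n e \<and> (\<forall>A\<in>Tdelta n (Dep k). satisfies n e A)"
  show p1: "e (Dep k) = ({\<lambda>i. if i < n then 1 else 0}, {\<lambda>i. 0})"
    using part1[OF assms] h by blast
  show "\<forall>w\<in>worlds n. degree n e (Dep k) w = (\<Sum>i<n. w i) / real n"
    using deg_formula[of e "Dep k", OF p1 _ assms] by blast
next
  fix c :: "nat \<Rightarrow> real" assume "\<forall>i<n. 0 \<le> c i \<and> c i \<le> 1"
  have cor: "correct n (Tdelta n (Dep k))"
    unfolding correct_def using e0_eval[OF assms] e0_sat[OF assms] by blast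
  show "entails n (Tdelta n (Dep k))
              (qimp (bigconj (map (\<lambda>i. GV (Basic i) (c i)) [0..<n]))
                    (GV (Dep k) ((\<Sum>i<n. c i) / real n)))"
    unfolding entails_def
  proof (intro conjI cor allI impI)
    fix e assume h: "is_eval n e \<and> (\<forall>B\<in>Tdelta n (Dep k). satisfies n e B)"
    have p1: "e (Dep k) = ({\<lambda>i. if i < n then 1 else 0}, {\<lambda>i. 0})"
      using part1[OF assms] h by blast
    show "satisfies n e (qimp (bigconj (map (\<lambda>i. GV (Basic i) (c i)) [0..<n]))
                    (GV (Dep k) ((\<Sum>i<n. c i) / real n)))"
      unfolding sat_qimp conj_basic[OF conjunct1[OF h] assms]
    proof
      fix w assume w: "w \<in> {w \<in> worlds n. \<forall>i<n. w i = c i}"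
      then have "(\<Sum>i<n. w i) = (\<Sum>i<n. c i)" by (intro sum.cong) auto
      then show "w \<in> qsem n e (GV (Dep k) ((\<Sum>i<n. c i) / real n))"
        using deg_formula[of e "Dep k", OF p1 _ assms, of w] w by auto
    qed
  qed
qed

end
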